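(* Consider the FJ-FA system with availability one and locality two (defined in the context), with systematic service rate $\gamma$ and recovery service rates $\mu$, and let $\nu = \gamma + 2\mu$. Then the limiting fraction $w_s$ of requests completed by the systematic server and the limiting fraction $w_r$ of requests completed by the recovery group satisfy $$w_s \ge \frac{\gamma\nu}{\gamma\nu + 2\mu^2}, \qquad w_r \le \frac{2\mu^2}{\gamma\nu + 2\mu^2}.$$
   Context: Three servers store $a$ (systematic server), $b$ and $a+b$ (the two servers of the single recovery group for $a$). Requests arrive as a Poisson process of rate $\lambda$, and every request asks for $a$ (FJ-FA). Each request is replicated into a copy at the systematic server and a copy at the recovery group; the latter is forked into one sub-copy at each of the two recovery servers and completes when both sub-copies finish. The request completes as soon as its systematic copy finishes or its recovery-group copy completes, and all its outstanding copies/sub-copies (queued or in service) are then removed immediately. Each server has a FCFS queue and serves one sub-copy at a time; service times are independent across servers and copies, $\mathrm{Exp}(\gamma)$ at the systematic server and $\mathrm{Exp}(\mu)$ at each recovery server. The system is assumed stable and $w_s$, $w_r$ are steady-state (limiting) fractions of request completions, with $w_s + w_r = 1$. *)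

theory Defs
  imports "HOL-Probability.Probability"
begin

text \<open>
  A state is the list of requests present, in arrival order (FCFS).  Each request
  carries two flags: whether its sub-copy at recovery server b has finished
  (first flag) and whether its sub-copy at recovery server a+b has finished
  (second flag).  The systematic server serves the oldest request (every request
  present still has its systematic copy).  Each recovery server serves the oldest
  request whose sub-copy at that server has not finished yet.
\<close>

type_synonym fjfa_state = "(bool \<times> bool) list"

text \<open>Service completion at recovery server b: new state, and whether the
  request thereby completes via its recovery group.\<close>
fun serve_b :: "fjfa_state \<Rightarrow> (fjfa_state \<times> bool) option" where
  "serve_b [] = None"
| "serve_b ((b, c) # xs) =
     (if \<not> b then Some (if c then (xs, True) else ((True, c) # xs, False))
      else map_option (\<lambda>(ys, d). ((b, c) # ys, d)) (serve_b xs))"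

fun serve_ab :: "fjfa_state \<Rightarrow> (fjfa_state \<times> bool) option" where
  "serve_ab [] = None"
| "serve_ab ((b, c) # xs) =
     (if \<not> c then Some (if b then (xs, True) else ((b, True) # xs, False))
      else map_option (\<lambda>(ys, d). ((b, c) # ys, d)) (serve_ab xs))"

definition fjfa_trans :: "real \<Rightarrow> real \<Rightarrow> real \<Rightarrow> fjfa_state \<Rightarrow> (real \<times> fjfa_state) list" where
  "fjfa_trans lam gam mu xs =
     [(lam, xs @ [(False, False)])]
     @ (if xs = [] then [] else [(gam, tl xs)])
     @ (case serve_b xs of None \<Rightarrow> [] | Some (ys, _) \<Rightarrow> [(mu, ys)])
     @ (case serve_ab xs of None \<Rightarrow> [] | Some (ys, _) \<Rightarrow> [(mu, ys)])"

definition fjfa_rate :: "real \<Rightarrow> real \<Rightarrow> real \<Rightarrow> fjfa_state \<Rightarrow> fjfa_state \<Rightarrow> real" where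
  "fjfa_rate lam gam mu x y =
     sum_list (map fst (filter (\<lambda>(r, z). z = y) (fjfa_trans lam gam mu x)))"

definition fjfa_out :: "real \<Rightarrow> real \<Rightarrow> real \<Rightarrow> fjfa_state \<Rightarrow> real" where
  "fjfa_out lam gam mu x =
     sum_list (map fst (filter (\<lambda>(r, z). z \<noteq> x) (fjfa_trans lam gam mu x)))"

definition fjfa_stationary :: "real \<Rightarrow> real \<Rightarrow> real \<Rightarrow> fjfa_state pmf \<Rightarrow> bool" where
  "fjfa_stationary lam gam mu p \<longleftrightarrow>
     (\<forall>y. ((\<lambda>x. pmf p x * fjfa_rate lam gam mu x y) has_sum
            (pmf p y * fjfa_out lam gam mu y)) UNIV)"

definition sys_compl_rate :: "real \<Rightarrow> fjfa_state \<Rightarrow> real" where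
  "sys_compl_rate gam xs = (if xs \<noteq> [] then gam else 0)"

definition rec_compl_rate :: "real \<Rightarrow> fjfa_state \<Rightarrow> real" where
  "rec_compl_rate mu xs =
     (case serve_b xs of Some (_, True) \<Rightarrow> mu | _ \<Rightarrow> 0)
   + (case serve_ab xs of Some (_, True) \<Rightarrow> mu | _ \<Rightarrow> 0)"

definition sys_throughput :: "real \<Rightarrow> fjfa_state pmf \<Rightarrow> real" where
  "sys_throughput gam p = (\<Sum>\<^sub>\<infinity>x. pmf p x * sys_compl_rate gam x)"

definition rec_throughput :: "real \<Rightarrow> fjfa_state pmf \<Rightarrow> real" where
  "rec_throughput mu p = (\<Sum>\<^sub>\<infinity>x. pmf p x * rec_compl_rate mu x)"

definition w_s :: "real \<Rightarrow> real \<Rightarrow> fjfa_state pmf \<Rightarrow> real" where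
  "w_s gam mu p = sys_throughput gam p / (sys_throughput gam p + rec_throughput mu p)"

definition w_r :: "real \<Rightarrow> real \<Rightarrow> fjfa_state pmf \<Rightarrow> real" where
  "w_r gam mu p = rec_throughput mu p / (sys_throughput gam p + rec_throughput mu p)"

end

theory Submission
  imports Defs
begin



lemma trans_nonneg:
  "lam \<ge> 0 \<Longrightarrow> gam \<ge> 0 \<Longrightarrow> mu \<ge> 0 \<Longrightarrow> (r,z) \<in> set (fjfa_trans lam gam mu x) \<Longrightarrow> r \<ge> 0"
  by (auto simp: fjfa_trans_def split: option.splits if_splits)

lemma sum_filter_list:
  fixes L :: "(real \<times> 'a) list"
  assumes T: "finite T" and sub: "set (map snd L) \<subseteq> T"
  shows "(\<Sum>y\<in>T. sum_list (map fst (filter (\<lambda>(r,z). z = y) L)) * h y) = sum_list (map (\<lambda>(r,z). r * h z) L)"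
  using sub
proof (induction L)
  case Nil then show ?case by simp
next
  case (Cons a L)
  obtain r z where a: "a = (r,z)" by force
  have zT: "z \<in> T" using Cons.prems a by auto
  have "(\<Sum>y\<in>T. sum_list (map fst (filter (\<lambda>(r,z). z = y) (a#L))) * h y)
      = (\<Sum>y\<in>T. (if z = y then r * h y else 0) + sum_list (map fst (filter (\<lambda>(r,z). z = y) L)) * h y)"
    by (intro sum.cong) (auto simp: a algebra_simps)
  also have "\<dots> = r * h z + (\<Sum>y\<in>T. sum_list (map fst (filter (\<lambda>(r,z). z = y) L)) * h y)"
    using zT T by (simp add: sum.distrib)
  also have "\<dots> = r * h z + sum_list (map (\<lambda>(r,z). r * h z) L)"
    using Cons by simp
  finally show ?case by (simp add: a)
qed

lemma Q_alt:
  "(\<And>r z. (r,z) \<in> set L \<Longrightarrow> z \<noteq> x) \<Longrightarrow>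
   sum_list (map (\<lambda>(r,z). r * f z) L) - sum_list (map fst (filter (\<lambda>(r,z). z \<noteq> x) L)) * (f x :: real)
   = sum_list (map (\<lambda>(r,z). r * (f z - f x)) L)"
proof (induction L)
  case (Cons a L) then show ?case by (cases a) (auto simp: algebra_simps)
qed simp

lemma sum_list_abs_le:
  fixes L :: "(real \<times> 'a) list"
  assumes "\<And>r z. (r,z) \<in> set L \<Longrightarrow> r \<ge> 0" "\<And>z. \<bar>f z\<bar> \<le> M"
  shows "\<bar>sum_list (map (\<lambda>(r,z). r * f z) L)\<bar> \<le> sum_list (map fst L) * M"
  using assms(1)
proof (induction L)
  case Nil then show ?case by simp
next
  case (Cons a L)
  obtain r z where a: "a = (r,z)" by force
  have r: "r \<ge> 0" using Cons.prems a by auto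
  have "\<bar>r * f z\<bar> \<le> r * M" using r assms(2)[of z] by (simp add: abs_mult mult_left_mono)
  moreover have "\<bar>sum_list (map (\<lambda>(r,z). r * f z) L)\<bar> \<le> sum_list (map fst L) * M" using Cons by auto
  ultimately show ?case by (simp add: a algebra_simps)
qed

lemma trans_total_le:
  assumes "lam \<ge> 0" "gam \<ge> 0" "mu \<ge> 0"
  shows "sum_list (map fst (fjfa_trans lam gam mu x)) \<le> lam + gam + 2 * mu"
  using assms by (auto simp: fjfa_trans_def split: option.splits)

lemma sum_list_filter_le0:
  fixes L :: "(real \<times> 'a) list"
  assumes "\<And>r z. (r,z) \<in> set L \<Longrightarrow> r \<ge> 0"
  shows "0 \<le> sum_list (map fst (filter P L)) \<and> sum_list (map fst (filter P L)) \<le> sum_list (map fst L)"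
  using assms
proof (induction L)
  case (Cons a L) then show ?case by (cases a) fastforce
qed simp

lemma pmf_summable: "pmf p summable_on A"
proof -
  have "Infinite_Sum.abs_summable_on (pmf p) A"
    using abs_summable_equivalent pmf_abs_summable by blast
  then show ?thesis using abs_summable_summable by blast
qed

lemma pmf_bounded_summable:
  fixes h :: "'a \<Rightarrow> real"
  assumes "\<And>x. \<bar>h x\<bar> \<le> C"
  shows "(\<lambda>x. pmf p x * h x) summable_on A"
proof -
  have "(\<lambda>x. C * pmf p x) summable_on A"
    by (intro summable_on_cmult_right pmf_summable)
  then have "(\<lambda>x. norm (pmf p x * h x)) summable_on A"
    by (rule summable_on_comparison_test)
       (auto simp: abs_mult mult.commute intro!: mult_right_mono assms)
  then show ?thesis by (rule abs_summable_summable)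
qed




fun wt :: "bool \<times> bool \<Rightarrow> nat" where "wt (b,c) = 3 - (if b then 1 else 0) - (if c then 1 else 0)"

lemma serve_b_dec: "serve_b x = Some (ys, d) \<Longrightarrow> sum_list (map wt ys) < sum_list (map wt x)"
  by (induction x arbitrary: ys d rule: serve_b.induct) (auto split: if_splits)

lemma serve_ab_dec: "serve_ab x = Some (ys, d) \<Longrightarrow> sum_list (map wt ys) < sum_list (map wt x)"
  by (induction x arbitrary: ys d rule: serve_ab.induct) (auto split: if_splits)

lemma trans_cases:
  "(r, z) \<in> set (fjfa_trans lam gam mu x) \<Longrightarrow>
   (r = lam \<and> z = x @ [(False,False)]) \<or> (r = gam \<and> x \<noteq> [] \<and> z = tl x) \<or>
   (r = mu \<and> (\<exists>d. serve_b x = Some (z,d))) \<or> (r = mu \<and> (\<exists>d. serve_ab x = Some (z,d)))"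
  by (auto simp: fjfa_trans_def split: option.splits if_splits; metis)

lemma no_self_loop: "(r, z) \<in> set (fjfa_trans lam gam mu x) \<Longrightarrow> z \<noteq> x"
  using trans_cases[of r z lam gam mu x] serve_b_dec[of x z] serve_ab_dec[of x z]
  by (cases x) auto




definition Qf :: "real \<Rightarrow> real \<Rightarrow> real \<Rightarrow> (fjfa_state \<Rightarrow> real) \<Rightarrow> fjfa_state \<Rightarrow> real" where
  "Qf lam gam mu f x = sum_list (map (\<lambda>(r,z). r * (f z - f x)) (fjfa_trans lam gam mu x))"

lemma rate_zero:
  assumes "y \<notin> set (map snd (fjfa_trans lam gam mu x))"
  shows "fjfa_rate lam gam mu x y = 0"
proof -
  have "filter (\<lambda>(r,z). z = y) (fjfa_trans lam gam mu x) = []"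
    using assms by (force simp: filter_empty_conv)
  then show ?thesis by (simp add: fjfa_rate_def)
qed

lemma rate_hassum:
  fixes h :: "fjfa_state \<Rightarrow> real"
  shows "((\<lambda>y. fjfa_rate lam gam mu x y * h y) has_sum
           sum_list (map (\<lambda>(r,z). r * h z) (fjfa_trans lam gam mu x))) UNIV"
proof -
  let ?L = "fjfa_trans lam gam mu x"
  let ?T = "set (map snd ?L)"
  have e: "(\<Sum>y\<in>?T. fjfa_rate lam gam mu x y * h y) = sum_list (map (\<lambda>(r,z). r * h z) ?L)"
    unfolding fjfa_rate_def by (rule sum_filter_list) auto
  have "((\<lambda>y. fjfa_rate lam gam mu x y * h y) has_sum (\<Sum>y\<in>?T. fjfa_rate lam gam mu x y * h y)) ?T"
    by (rule has_sum_finite) simp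
  then have "((\<lambda>y. fjfa_rate lam gam mu x y * h y) has_sum sum_list (map (\<lambda>(r,z). r * h z) ?L)) ?T"
    unfolding e .
  then show ?thesis
    by (subst has_sum_cong_neutral[where T = ?T and g = "\<lambda>y. fjfa_rate lam gam mu x y * h y"])
       (auto simp: rate_zero)
qed

lemma exchange:
  fixes f :: "fjfa_state \<Rightarrow> real"
  assumes pos: "lam > 0" "gam > 0" "mu > 0" and st: "fjfa_stationary lam gam mu p"
    and bnd: "\<And>x. \<bar>f x\<bar> \<le> M"
  shows "(\<Sum>\<^sub>\<infinity>x. pmf p x * Qf lam gam mu f x) = 0"
proof -
  define K where "K = lam + gam + 2*mu"
  define R where "R = fjfa_rate lam gam mu"
  define L where "L = fjfa_trans lam gam mu"
  define A where "A x = sum_list (map (\<lambda>(r,z). r * f z) (L x))" for x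
  define out where "out = fjfa_out lam gam mu"
  define Rt where "Rt x = sum_list (map fst (L x))" for x
  have rnn: "\<And>r z x. (r,z) \<in> set (L x) \<Longrightarrow> r \<ge> 0"
    using trans_nonneg pos unfolding L_def by (meson less_imp_le)
  have M0: "M \<ge> 0" using bnd[of "[]"] by simp
  have RtK: "0 \<le> Rt x \<and> Rt x \<le> K" for x
    unfolding Rt_def K_def L_def using trans_total_le[of lam gam mu x] pos rnn[of _ _ x]
    by (auto intro!: sum_list_nonneg simp: L_def)
  have outb: "0 \<le> out x \<and> out x \<le> Rt x" for x
    unfolding out_def fjfa_out_def Rt_def L_def using sum_list_filter_le0 rnn unfolding L_def by blast
  have Rnn: "R x y \<ge> 0" for x y
    unfolding R_def fjfa_rate_def using sum_list_filter_le0 rnn unfolding L_def by blast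
  have hsA: "((\<lambda>y. R x y * f y) has_sum A x) UNIV" for x
    unfolding R_def A_def L_def by (rule rate_hassum)
  have hs1: "((\<lambda>y. R x y) has_sum Rt x) UNIV" for x
    using rate_hassum[where h = "\<lambda>_. 1" and x = x and lam = lam and gam = gam and mu = mu]
    unfolding R_def Rt_def L_def by (simp add: case_prod_unfold)
  have bA: "\<bar>A x\<bar> \<le> K * M" for x
  proof -
    have "\<bar>A x\<bar> \<le> Rt x * M" unfolding A_def Rt_def by (rule sum_list_abs_le) (use rnn bnd in auto)
    also have "\<dots> \<le> K * M" using RtK[of x] M0 by (simp add: mult_right_mono)
    finally show ?thesis .
  qed
  have bO: "\<bar>out x * f x\<bar> \<le> K * M" for x
  proof -
    have "\<bar>out x * f x\<bar> = out x * \<bar>f x\<bar>" using outb[of x] by (simp add: abs_mult)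
    also have "\<dots> \<le> K * M" using outb[of x] RtK[of x] bnd[of x] M0 by (intro mult_mono) auto
    finally show ?thesis .
  qed
  have stx: "((\<lambda>x. pmf p x * R x y) has_sum (pmf p y * out y)) UNIV" for y
    using st unfolding fjfa_stationary_def R_def out_def by blast
  have G: "(\<lambda>(x,y). pmf p x * R x y) summable_on Sigma UNIV (\<lambda>_. UNIV)"
  proof (rule summable_on_SigmaI[where g = "\<lambda>x. pmf p x * Rt x"])
    show "((\<lambda>y. case (x, y) of (x, y) \<Rightarrow> pmf p x * R x y) has_sum pmf p x * Rt x) UNIV" for x
      using has_sum_cmult_right[OF hs1[of x], of "pmf p x"] by simp
    show "(\<lambda>x. pmf p x * Rt x) summable_on UNIV"
      by (rule pmf_bounded_summable[where C = K]) (use RtK in auto)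
    show "0 \<le> (case (x, y) of (x, y) \<Rightarrow> pmf p x * R x y)" for x y
      using Rnn by simp
  qed
  have F: "(\<lambda>(x,y). pmf p x * R x y * f y) summable_on UNIV \<times> UNIV"
  proof -
    have "(\<lambda>xy. M * (case xy of (x,y) \<Rightarrow> pmf p x * R x y)) summable_on UNIV \<times> UNIV"
      using summable_on_cmult_right[OF G] by simp
    then have "(\<lambda>xy. norm (case xy of (x,y) \<Rightarrow> pmf p x * R x y * f y)) summable_on UNIV \<times> UNIV"
    proof (rule summable_on_comparison_test)
      fix xy :: "fjfa_state \<times> fjfa_state"
      obtain x y where xy: "xy = (x,y)" by force
      have "norm (pmf p x * R x y * f y) = (pmf p x * R x y) * \<bar>f y\<bar>"
        using Rnn[of x y] by (simp add: abs_mult)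
      also have "\<dots> \<le> (pmf p x * R x y) * M" using Rnn[of x y] bnd[of y] by (intro mult_left_mono) auto
      finally show "norm (case xy of (x,y) \<Rightarrow> pmf p x * R x y * f y) \<le> M * (case xy of (x,y) \<Rightarrow> pmf p x * R x y)"
        by (simp add: xy mult.commute)
    qed simp
    then show ?thesis by (rule abs_summable_summable)
  qed
  have swap: "(\<Sum>\<^sub>\<infinity>x. \<Sum>\<^sub>\<infinity>y. pmf p x * R x y * f y) = (\<Sum>\<^sub>\<infinity>y. \<Sum>\<^sub>\<infinity>x. pmf p x * R x y * f y)"
    using infsum_swap_banach[of "\<lambda>x y. pmf p x * R x y * f y" UNIV UNIV] F by simp
  have in1: "(\<Sum>\<^sub>\<infinity>y. pmf p x * R x y * f y) = pmf p x * A x" for x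
    by (rule infsumI) (use has_sum_cmult_right[OF hsA[of x], of "pmf p x"] in \<open>simp add: mult.assoc\<close>)
  have in2: "(\<Sum>\<^sub>\<infinity>x. pmf p x * R x y * f y) = pmf p y * (out y * f y)" for y
    by (rule infsumI) (use has_sum_cmult_left[OF stx[of y], of "f y"] in \<open>simp add: mult.assoc\<close>)
  have eq: "(\<Sum>\<^sub>\<infinity>x. pmf p x * A x) = (\<Sum>\<^sub>\<infinity>x. pmf p x * (out x * f x))"
    using swap in1 in2 by simp
  have Q: "Qf lam gam mu f x = A x - out x * f x" for x
    unfolding Qf_def A_def out_def fjfa_out_def L_def
    by (rule Q_alt[symmetric]) (rule no_self_loop)
  have s1: "(\<lambda>x. pmf p x * A x) summable_on UNIV" by (rule pmf_bounded_summable) (rule bA)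
  have s2: "(\<lambda>x. - (pmf p x * (out x * f x))) summable_on UNIV"
    using summable_on_cmult_right[OF pmf_bounded_summable[of "\<lambda>x. out x * f x", OF bO], of "-1"] by simp
  have "(\<Sum>\<^sub>\<infinity>x. pmf p x * Qf lam gam mu f x) = (\<Sum>\<^sub>\<infinity>x. pmf p x * A x + - (pmf p x * (out x * f x)))"
    by (simp add: Q algebra_simps)
  also have "\<dots> = 0" using infsum_add[OF s1 s2] infsum_uminus[of "\<lambda>x. pmf p x * (out x * f x)" UNIV] eq by simp
  finally show ?thesis .
qed




definition st :: "bool \<Rightarrow> nat \<Rightarrow> nat \<Rightarrow> fjfa_state" where
  "st t k n = replicate k (if t then (True, False) else (False, True)) @ replicate n (False, False)"

definition valid :: "fjfa_state \<Rightarrow> bool" where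
  "valid x \<longleftrightarrow> (\<exists>t k n. x = st t k n)"

lemma st0: "st t 0 n = replicate n (False, False)" by (simp add: st_def)

lemma serve_b_Z: "serve_b (replicate n (False,False)) =
   (if n = 0 then None else Some (st True 1 (n - 1), False))"
  by (cases n) (auto simp: st_def)

lemma serve_ab_Z: "serve_ab (replicate n (False,False)) =
   (if n = 0 then None else Some (st False 1 (n - 1), False))"
  by (cases n) (auto simp: st_def)

lemma serve_b_T: "serve_b (st True k n) = (if n = 0 then None else Some (st True (k+1) (n - 1), False))"
proof (induction k)
  case 0 then show ?case by (simp add: st0 serve_b_Z)
next
  case (Suc k) then show ?case by (auto simp: st_def)
qed

lemma serve_ab_F: "serve_ab (st False k n) = (if n = 0 then None else Some (st False (k+1) (n - 1), False))"
proof (induction k)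
  case 0 then show ?case by (simp add: st0 serve_ab_Z)
next
  case (Suc k) then show ?case by (auto simp: st_def)
qed

lemma serve_b_F: "k > 0 \<Longrightarrow> serve_b (st False k n) = Some (st False (k - 1) n, True)"
  by (cases k) (auto simp: st_def)

lemma serve_ab_T: "k > 0 \<Longrightarrow> serve_ab (st True k n) = Some (st True (k - 1) n, True)"
  by (cases k) (auto simp: st_def)

lemma serve_b_0: "serve_b (st t 0 n) = (if n = 0 then None else Some (st True 1 (n - 1), False))"
  by (simp add: st0 serve_b_Z)

lemma serve_ab_0: "serve_ab (st t 0 n) = (if n = 0 then None else Some (st False 1 (n - 1), False))"
  by (simp add: st0 serve_ab_Z)

lemma st_app: "st t k n @ [(False, False)] = st t k (Suc n)"
  by (simp add: st_def replicate_append_same)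

lemma st_tl: "tl (st t k n) = (if k > 0 then st t (k - 1) n else st t 0 (n - 1))"
  by (cases k; cases n) (auto simp: st_def)

lemma st_nil: "st t k n = [] \<longleftrightarrow> k = 0 \<and> n = 0"
  by (simp add: st_def)

lemma valid_trans:
  assumes "valid x" "(r, z) \<in> set (fjfa_trans lam gam mu x)"
  shows "valid z"
proof -
  obtain t k n where x: "x = st t k n" using assms(1) valid_def by blast
  have "k = 0 \<or> (k > 0 \<and> t) \<or> (k > 0 \<and> \<not> t)" by auto
  then show ?thesis
    using trans_cases[OF assms(2)] unfolding valid_def
    by (elim disjE)
       (auto simp: x st_app st_tl serve_b_0 serve_ab_0 serve_b_T serve_ab_F serve_b_F serve_ab_T split: if_splits)
qed




lemma Qf_bound:
  assumes pos: "lam > 0" "gam > 0" "mu > 0" and bnd: "\<And>x. \<bar>f x\<bar> \<le> M"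
  shows "\<bar>Qf lam gam mu f x\<bar> \<le> (lam + gam + 2 * mu) * (2 * M)"
proof -
  have M0: "M \<ge> 0" using bnd[of "[]"] by simp
  have "\<bar>Qf lam gam mu f x\<bar> \<le> sum_list (map fst (fjfa_trans lam gam mu x)) * (2 * M)"
    unfolding Qf_def
  proof (rule sum_list_abs_le)
    show "0 \<le> r" if "(r, z) \<in> set (fjfa_trans lam gam mu x)" for r z
      using trans_nonneg[OF _ _ _ that] pos by simp
    show "\<bar>f z - f x\<bar> \<le> 2 * M" for z using bnd[of z] bnd[of x] by linarith
  qed
  also have "\<dots> \<le> (lam + gam + 2 * mu) * (2 * M)"
    using trans_total_le[of lam gam mu x] pos M0 by (intro mult_right_mono) auto
  finally show ?thesis .
qed

lemma le_infsum_single: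
  fixes g :: "'a \<Rightarrow> real"
  assumes "\<And>x. g x \<ge> 0" "g summable_on UNIV"
  shows "g x \<le> infsum g UNIV"
proof -
  have "infsum g {x} \<le> infsum g UNIV"
    by (rule infsum_mono_neutral) (use assms in auto)
  then show ?thesis by simp
qed

lemma valid_nil: "valid []"
  unfolding valid_def by (rule exI[of _ True], rule exI[of _ 0], rule exI[of _ 0]) (simp add: st_def)

lemma invalid_zero:
  assumes pos: "lam > 0" "gam > 0" "mu > 0" and stat: "fjfa_stationary lam gam mu p"
  shows "\<not> valid x \<Longrightarrow> pmf p x = 0"
proof -
  define f where "f x = (if valid x then 1 else 0::real)" for x
  have fb: "\<bar>f x\<bar> \<le> 1" for x by (simp add: f_def)
  have ex: "(\<Sum>\<^sub>\<infinity>x. pmf p x * Qf lam gam mu f x) = 0" by (rule exchange[OF pos stat fb])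
  have Qnn: "Qf lam gam mu f x \<ge> 0" for x
    unfolding Qf_def
  proof (rule sum_list_nonneg)
    fix v assume "v \<in> set (map (\<lambda>(r,z). r * (f z - f x)) (fjfa_trans lam gam mu x))"
    then obtain r z where rz: "(r,z) \<in> set (fjfa_trans lam gam mu x)" and v: "v = r * (f z - f x)" by auto
    have "r \<ge> 0" using trans_nonneg[OF _ _ _ rz] pos by simp
    moreover have "f z - f x \<ge> 0" using valid_trans[OF _ rz] by (auto simp: f_def)
    ultimately show "0 \<le> v" by (simp add: v)
  qed
  have summ: "(\<lambda>x. pmf p x * Qf lam gam mu f x) summable_on UNIV"
    by (rule pmf_bounded_summable) (rule Qf_bound[OF pos fb])
  have zero: "pmf p x * Qf lam gam mu f x = 0" for x
  proof -
    have nn: "\<And>x. 0 \<le> pmf p x * Qf lam gam mu f x" using Qnn by simp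
    show ?thesis using le_infsum_single[OF nn summ, of x] ex nn[of x] by simp
  qed
  have "\<forall>x. length x = m \<longrightarrow> \<not> valid x \<longrightarrow> pmf p x = 0" for m
  proof (induction m rule: less_induct)
    case (less m)
    show ?case
    proof (intro allI impI, rule ccontr)
      fix x assume len: "length x = m" and nv: "\<not> valid x" and ne: "pmf p x \<noteq> 0"
      have xne: "x \<noteq> []" using nv valid_nil by auto
      have px: "pmf p x > 0" using ne pmf_nonneg[of p x] by linarith
      have Qx: "Qf lam gam mu f x = 0" using zero[of x] ne by simp
      have mem: "(gam, tl x) \<in> set (fjfa_trans lam gam mu x)" by (simp add: fjfa_trans_def xne)
      have "gam * (f (tl x) - f x) \<le> Qf lam gam mu f x"
        unfolding Qf_def
      proof (rule member_le_sum_list)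
        show "gam * (f (tl x) - f x) \<in> set (map (\<lambda>(r,z). r * (f z - f x)) (fjfa_trans lam gam mu x))"
          using mem by force
        fix v assume "v \<in> set (map (\<lambda>(r,z). r * (f z - f x)) (fjfa_trans lam gam mu x))"
        then obtain r z where rz: "(r,z) \<in> set (fjfa_trans lam gam mu x)" and v: "v = r * (f z - f x)" by auto
        have "r \<ge> 0" using trans_nonneg[OF _ _ _ rz] pos by simp
        moreover have "f z - f x \<ge> 0" using nv by (auto simp: f_def)
        ultimately show "0 \<le> v" by (simp add: v)
      qed
      then have "f (tl x) \<le> 0" using Qx nv pos by (simp add: f_def mult_le_0_iff)
      then have nvt: "\<not> valid (tl x)" by (auto simp: f_def split: if_splits)
      have Rge: "gam \<le> fjfa_rate lam gam mu x (tl x)"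
        unfolding fjfa_rate_def
      proof (rule member_le_sum_list)
        show "gam \<in> set (map fst (filter (\<lambda>(r, z). z = tl x) (fjfa_trans lam gam mu x)))"
          using mem by force
        fix v assume "v \<in> set (map fst (filter (\<lambda>(r, z). z = tl x) (fjfa_trans lam gam mu x)))"
        then obtain z where rz: "(v,z) \<in> set (fjfa_trans lam gam mu x)" by auto
        show "0 \<le> v" using trans_nonneg[OF _ _ _ rz] pos by simp
      qed
      have hs: "((\<lambda>x'. pmf p x' * fjfa_rate lam gam mu x' (tl x)) has_sum
                  (pmf p (tl x) * fjfa_out lam gam mu (tl x))) UNIV"
        using stat unfolding fjfa_stationary_def by blast
      have Rnn: "fjfa_rate lam gam mu x' y \<ge> 0" for x' y
        unfolding fjfa_rate_def using sum_list_filter_le0 trans_nonneg pos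
        by (metis less_imp_le)
      have "pmf p x * fjfa_rate lam gam mu x (tl x) \<le> (\<Sum>\<^sub>\<infinity>x'. pmf p x' * fjfa_rate lam gam mu x' (tl x))"
        proof (rule le_infsum_single)
        show "(\<lambda>x'. pmf p x' * fjfa_rate lam gam mu x' (tl x)) summable_on UNIV"
          using hs unfolding summable_on_def by blast
      qed (simp add: Rnn)
      also have "\<dots> = pmf p (tl x) * fjfa_out lam gam mu (tl x)" using hs by (rule infsumI)
      finally have A1: "pmf p x * fjfa_rate lam gam mu x (tl x) \<le> pmf p (tl x) * fjfa_out lam gam mu (tl x)" .
      have A2: "pmf p x * gam \<le> pmf p x * fjfa_rate lam gam mu x (tl x)"
        using Rge px by (intro mult_left_mono) auto
      have A3: "0 < pmf p x * gam" using px pos by simp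
      have "pmf p (tl x) \<noteq> 0"
      proof
        assume "pmf p (tl x) = 0"
        then show False using A1 A2 A3 by simp
      qed
      moreover have "length (tl x) < m" using len xne by (cases x) auto
      ultimately show False using less nvt by blast
    qed
  qed
  then show "\<not> valid x \<Longrightarrow> pmf p x = 0" by blast
qed




definition kk :: "fjfa_state \<Rightarrow> nat" where
  "kk x = length (takeWhile (\<lambda>(b,c). b \<noteq> c) x)"

lemma kk_st: "kk (st t k n) = k"
proof (induction k)
  case 0 then show ?case by (cases n) (auto simp: kk_def st_def)
next
  case (Suc k) then show ?case by (auto simp: kk_def st_def)
qed

lemma Qf_k0: "n > 0 \<Longrightarrow> Qf lam gam mu f (st t 0 n) =
   lam * (f (st t 0 (Suc n)) - f (st t 0 n)) + gam * (f (st t 0 (n - 1)) - f (st t 0 n))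
   + mu * (f (st True 1 (n - 1)) - f (st t 0 n)) + mu * (f (st False 1 (n - 1)) - f (st t 0 n))"
  by (simp add: Qf_def fjfa_trans_def st_app st_tl serve_b_0 serve_ab_0 st_nil)

lemma Qf_nil: "Qf lam gam mu f [] = lam * (f [(False,False)] - f [])"
  by (simp add: Qf_def fjfa_trans_def)

lemma Qf_kpos: "k > 0 \<Longrightarrow> Qf lam gam mu f (st t k n) =
   lam * (f (st t k (Suc n)) - f (st t k n)) + gam * (f (st t (k - 1) n) - f (st t k n))
   + (if n = 0 then 0 else mu * (f (st t (k + 1) (n - 1)) - f (st t k n)))
   + mu * (f (st t (k - 1) n) - f (st t k n))"
  by (cases t) (simp_all add: Qf_def fjfa_trans_def st_app st_tl serve_b_T serve_ab_F serve_b_F serve_ab_T st_nil)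

lemma rec_k0: "rec_compl_rate mu (st t 0 n) = 0"
  by (simp add: rec_compl_rate_def serve_b_0 serve_ab_0)

lemma rec_kpos: "k > 0 \<Longrightarrow> rec_compl_rate mu (st t k n) = mu"
  by (cases t) (simp_all add: rec_compl_rate_def serve_b_T serve_ab_F serve_b_F serve_ab_T)




definition fN :: "real \<Rightarrow> real \<Rightarrow> nat \<Rightarrow> fjfa_state \<Rightarrow> real" where
  "fN gam mu N x = - (gam * mu) * real (min (kk x) N)"

definition GG :: "real \<Rightarrow> real \<Rightarrow> fjfa_state \<Rightarrow> real" where
  "GG gam mu x = gam * (gam + 2 * mu) * rec_compl_rate mu x - 2 * mu ^ 2 * sys_compl_rate gam x"

lemma pointwise:
  assumes pos: "lam > 0" "gam > 0" "mu > 0" and v: "valid x"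
  shows "GG gam mu x \<le> Qf lam gam mu (fN gam mu N) x + gam ^ 2 * mu * (if N < kk x then 1 else 0)"
proof -
  obtain t k n where x: "x = st t k n" using v valid_def by blast
  let ?f = "fN gam mu N"
  consider "k = 0" "n = 0" | "k = 0" "n > 0" | "k > 0" by auto
  then show ?thesis
  proof cases
    case 1
    then have "x = []" by (simp add: x st_def)
    then show ?thesis by (simp add: Qf_nil GG_def rec_compl_rate_def sys_compl_rate_def fN_def kk_def)
  next
    case 2
    have ne: "x \<noteq> []" using 2 by (simp add: x st_nil)
    have "Qf lam gam mu ?f x = - 2 * mu * (gam * mu) * real (min 1 N)"
      using 2 by (simp add: x Qf_k0 fN_def kk_st algebra_simps)
    moreover have "GG gam mu x = - 2 * mu ^ 2 * gam"
      using 2 ne by (simp add: x rec_k0 GG_def sys_compl_rate_def)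
    moreover have "2 * mu * (gam * mu) * real (min 1 N) \<le> 2 * mu * (gam * mu) * 1"
      using pos by (intro mult_left_mono) auto
    moreover have "kk x = 0" using 2 by (simp add: x kk_st)
    ultimately show ?thesis by (simp add: power2_eq_square algebra_simps)
  next
    case 3
    have ne: "x \<noteq> []" using 3 by (simp add: x st_nil)
    have G: "GG gam mu x = gam ^ 2 * mu"
      using 3 ne by (simp add: x rec_kpos GG_def sys_compl_rate_def power2_eq_square algebra_simps)
    have D1: "?f (st t (k - 1) n) - ?f (st t k n) = (if k \<le> N then gam * mu else 0)"
    proof (cases "k \<le> N")
      case True
      then have "real (min (k - 1) N) = real k - 1" "real (min k N) = real k" using 3 by auto
      then show ?thesis using True by (simp add: fN_def kk_st algebra_simps)
    next
      case False
      then have "min (k - 1) N = N" "min k N = N" by auto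
      then show ?thesis using False by (simp add: fN_def kk_st)
    qed
    have D2: "?f (st t (k + 1) (n - 1)) - ?f (st t k n) \<ge> (if k \<le> N then - (gam * mu) else 0)"
    proof (cases "k \<le> N")
      case True
      have e: "?f (st t (k + 1) (n - 1)) - ?f (st t k n) = gam * mu * real k - gam * mu * real (min (k + 1) N)"
        using True by (simp add: fN_def kk_st algebra_simps)
      have "gam * mu * real (min (k + 1) N) \<le> gam * mu * (real k + 1)"
        using pos by (intro mult_left_mono) auto
      then show ?thesis using True unfolding e by (simp add: algebra_simps)
    next
      case False
      then have "min (k + 1) N = N" "min k N = N" by auto
      then show ?thesis using False by (simp add: fN_def kk_st)
    qed
    have D0: "?f (st t k (Suc n)) - ?f (st t k n) = 0" by (simp add: fN_def kk_st)
    have Q: "Qf lam gam mu ?f x = gam * (?f (st t (k - 1) n) - ?f (st t k n))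
       + (if n = 0 then 0 else mu * (?f (st t (k + 1) (n - 1)) - ?f (st t k n)))
       + mu * (?f (st t (k - 1) n) - ?f (st t k n))"
      using 3 D0 by (simp add: x Qf_kpos)
    show ?thesis
    proof (cases "k \<le> N")
      case True
      have a: "mu * (?f (st t (k + 1) (n - 1)) - ?f (st t k n)) \<ge> mu * (- (gam * mu))"
        using D2 True pos by (intro mult_left_mono) auto
      have "Qf lam gam mu ?f x \<ge> gam * (gam * mu) + mu * (- (gam * mu)) + mu * (gam * mu)"
        using a True pos unfolding Q D1 by (auto simp: mult_nonneg_nonneg)
      then show ?thesis using G True 3 by (simp add: x kk_st power2_eq_square algebra_simps)
    next
      case False
      have "?f (st t (k + 1) (n - 1)) - ?f (st t k n) = 0" using False by (simp add: fN_def kk_st)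
      then have "Qf lam gam mu ?f x = 0" using False unfolding Q D1 by simp
      then show ?thesis using G False by (simp add: x kk_st)
    qed
  qed
qed




lemma rec_bound: "mu > 0 \<Longrightarrow> 0 \<le> rec_compl_rate mu x \<and> rec_compl_rate mu x \<le> 2 * mu"
  by (auto simp: rec_compl_rate_def split: option.splits bool.splits)

lemma sys_bound: "gam > 0 \<Longrightarrow> 0 \<le> sys_compl_rate gam x \<and> sys_compl_rate gam x \<le> gam"
  by (auto simp: sys_compl_rate_def)

lemma infsum_pmf_indicator:
  "(\<Sum>\<^sub>\<infinity>x. pmf p x * (if x \<in> S then 1 else 0)) = measure_pmf.prob p S"
proof -
  have "(\<Sum>\<^sub>\<infinity>x. pmf p x * (if x \<in> S then 1 else 0)) = infsum (pmf p) S"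
    by (rule infsum_cong_neutral) auto
  also have "\<dots> = infsetsum (pmf p) S" by (rule infsetsum_infsum[symmetric]) (rule pmf_abs_summable)
  also have "\<dots> = measure_pmf.prob p S" by (rule measure_pmf_conv_infsetsum[symmetric])
  finally show ?thesis .
qed

lemma main_ineq:
  assumes pos: "lam > 0" "gam > 0" "mu > 0" and stat: "fjfa_stationary lam gam mu p"
  shows "gam * (gam + 2 * mu) * rec_throughput mu p - 2 * mu ^ 2 * sys_throughput gam p \<le> 0"
proof -
  have sR: "(\<lambda>x. pmf p x * rec_compl_rate mu x) summable_on UNIV"
    by (rule pmf_bounded_summable[where C = "2 * mu"]) (use rec_bound[OF pos(3)] in auto)
  have sS: "(\<lambda>x. pmf p x * sys_compl_rate gam x) summable_on UNIV"
    by (rule pmf_bounded_summable[where C = "gam"]) (use sys_bound[OF pos(2)] in auto)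
  have hG: "((\<lambda>x. pmf p x * GG gam mu x) has_sum
      (gam * (gam + 2 * mu) * rec_throughput mu p + - (2 * mu ^ 2 * sys_throughput gam p))) UNIV"
  proof -
    have "((\<lambda>x. gam * (gam + 2 * mu) * (pmf p x * rec_compl_rate mu x) + - (2 * mu ^ 2 * (pmf p x * sys_compl_rate gam x))) has_sum
      (gam * (gam + 2 * mu) * rec_throughput mu p + - (2 * mu ^ 2 * sys_throughput gam p))) UNIV"
      unfolding rec_throughput_def sys_throughput_def
      by (intro has_sum_add has_sum_cmult_right has_sum_uminusI has_sum_infsum sR sS)
    then show ?thesis by (simp add: GG_def algebra_simps)
  qed
  have sG: "(\<lambda>x. pmf p x * GG gam mu x) summable_on UNIV" using hG summable_on_def by blast
  define A where "A N = {x. N < kk x}" for N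
  have bound: "(\<Sum>\<^sub>\<infinity>x. pmf p x * GG gam mu x) \<le> gam ^ 2 * mu * measure_pmf.prob p (A N)" for N
  proof -
    let ?E = "\<lambda>x. gam ^ 2 * mu * (if N < kk x then 1 else 0)"
    have fb: "\<bar>fN gam mu N x\<bar> \<le> gam * mu * real N" for x
      using pos by (simp add: fN_def abs_mult mult_left_mono)
    have sQ: "(\<lambda>x. pmf p x * Qf lam gam mu (fN gam mu N) x) summable_on UNIV"
      by (rule pmf_bounded_summable) (rule Qf_bound[OF pos fb])
    have sE: "(\<lambda>x. pmf p x * ?E x) summable_on UNIV"
      by (rule pmf_bounded_summable[where C = "gam ^ 2 * mu"]) (use pos in auto)
    have "(\<Sum>\<^sub>\<infinity>x. pmf p x * GG gam mu x) \<le>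
          (\<Sum>\<^sub>\<infinity>x. pmf p x * Qf lam gam mu (fN gam mu N) x + pmf p x * ?E x)"
    proof (rule infsum_mono[OF sG summable_on_add[OF sQ sE]])
      fix x :: fjfa_state
      show "pmf p x * GG gam mu x \<le> pmf p x * Qf lam gam mu (fN gam mu N) x + pmf p x * ?E x"
      proof (cases "valid x")
        case True
        have "pmf p x * GG gam mu x \<le> pmf p x * (Qf lam gam mu (fN gam mu N) x + ?E x)"
          using pointwise[OF pos True, of N] by (intro mult_left_mono) auto
        then show ?thesis by (simp add: algebra_simps)
      next
        case False
        then show ?thesis using invalid_zero[OF pos stat] by simp
      qed
    qed
    also have "\<dots> = (\<Sum>\<^sub>\<infinity>x. pmf p x * Qf lam gam mu (fN gam mu N) x) + (\<Sum>\<^sub>\<infinity>x. pmf p x * ?E x)"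
      by (rule infsum_add[OF sQ sE])
    also have "(\<Sum>\<^sub>\<infinity>x. pmf p x * Qf lam gam mu (fN gam mu N) x) = 0"
      by (rule exchange[OF pos stat fb])
    also have "(\<Sum>\<^sub>\<infinity>x. pmf p x * ?E x) = gam ^ 2 * mu * (\<Sum>\<^sub>\<infinity>x. pmf p x * (if x \<in> A N then 1 else 0))"
      by (subst infsum_cmult_right'[symmetric]) (simp add: A_def algebra_simps)
    also have "\<dots> = gam ^ 2 * mu * measure_pmf.prob p (A N)" by (simp add: infsum_pmf_indicator)
    finally show ?thesis by simp
  qed
  have lim: "(\<lambda>N. measure_pmf.prob p (A N)) \<longlonglongrightarrow> measure_pmf.prob p (\<Inter>N. A N)"
    by (rule measure_pmf.finite_Lim_measure_decseq) (auto simp: decseq_def A_def)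
  have "(\<Inter>N. A N) = {}" by (auto simp: A_def)
  then have lim0: "(\<lambda>N. gam ^ 2 * mu * measure_pmf.prob p (A N)) \<longlonglongrightarrow> gam ^ 2 * mu * 0"
    using lim by (intro tendsto_mult_left) simp
  have "(\<Sum>\<^sub>\<infinity>x. pmf p x * GG gam mu x) \<le> gam ^ 2 * mu * 0"
    by (rule LIMSEQ_le_const[OF lim0]) (use bound in auto)
  then show ?thesis using infsumI[OF hG] by simp
qed




lemma sys_pos:
  assumes pos: "lam > 0" "gam > 0" "mu > 0" and stat: "fjfa_stationary lam gam mu p"
  shows "sys_throughput gam p > 0"
proof (rule ccontr)
  assume "\<not> sys_throughput gam p > 0"
  have nn: "\<And>x. 0 \<le> pmf p x * sys_compl_rate gam x" using sys_bound[OF pos(2)] by simp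
  have sS: "(\<lambda>x. pmf p x * sys_compl_rate gam x) summable_on UNIV"
    by (rule pmf_bounded_summable[where C = "gam"]) (use sys_bound[OF pos(2)] in auto)
  have z: "pmf p x = 0" if "x \<noteq> []" for x
  proof -
    have "pmf p x * sys_compl_rate gam x \<le> sys_throughput gam p"
      unfolding sys_throughput_def by (rule le_infsum_single[OF nn sS])
    then have "pmf p x * gam \<le> 0" using \<open>\<not> sys_throughput gam p > 0\<close> that
      by (simp add: sys_compl_rate_def)
    then show ?thesis using pos pmf_nonneg[of p x] by (simp add: mult_le_0_iff)
  qed
  have hs: "((\<lambda>x. pmf p x * fjfa_rate lam gam mu x []) has_sum (pmf p [] * fjfa_out lam gam mu [])) UNIV"
    using stat unfolding fjfa_stationary_def by blast
  have "(\<lambda>x. pmf p x * fjfa_rate lam gam mu x []) = (\<lambda>x. 0)"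
  proof
    fix x show "pmf p x * fjfa_rate lam gam mu x [] = 0"
    proof (cases "x = []")
      case True
      have "fjfa_rate lam gam mu [] [] = 0"
        by (rule rate_zero) (use no_self_loop in force)
      then show ?thesis using True by simp
    qed (simp add: z)
  qed
  with hs have "pmf p [] * fjfa_out lam gam mu [] = 0"
    using has_sum_0 has_sum_unique by (metis)
  moreover have "fjfa_out lam gam mu [] = lam" by (simp add: fjfa_out_def fjfa_trans_def)
  ultimately have "pmf p [] = 0" using pos by simp
  then have "\<forall>x. pmf p x = 0" using z by metis
  moreover obtain x where "x \<in> set_pmf p" using set_pmf_not_empty[of p] by blast
  ultimately show False by (simp add: set_pmf_eq)
qed

theorem theorem5:
  fixes lam gam mu :: real and p :: "fjfa_state pmf"
  assumes "lam > 0" and "gam > 0" and "mu > 0"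
    and "fjfa_stationary lam gam mu p"
  shows "w_s gam mu p \<ge> gam * (gam + 2 * mu) / (gam * (gam + 2 * mu) + 2 * mu ^ 2) \<and>
         w_r gam mu p \<le> 2 * mu ^ 2 / (gam * (gam + 2 * mu) + 2 * mu ^ 2)"
proof -
  define S where "S = sys_throughput gam p"
  define R where "R = rec_throughput mu p"
  define c where "c = gam * (gam + 2 * mu)"
  define d where "d = 2 * mu ^ 2"
  have S: "S > 0" unfolding S_def by (rule sys_pos[OF assms])
  have R: "R \<ge> 0" unfolding R_def rec_throughput_def
    by (rule infsum_nonneg) (use rec_bound[OF assms(3)] in auto)
  have c: "c > 0" unfolding c_def using assms by simp
  have d: "d > 0" unfolding d_def using assms by simp
  have ineq: "c * R \<le> d * S" using main_ineq[OF assms] unfolding c_def d_def R_def S_def by simp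
  have SR: "S + R > 0" using S R by simp
  have 1: "c / (c + d) \<le> S / (S + R)"
  proof -
    have "c * (S + R) \<le> S * (c + d)" using ineq by (simp add: algebra_simps)
    then show ?thesis using SR c d by (simp add: divide_simps)
  qed
  have 2: "R / (S + R) \<le> d / (c + d)"
  proof -
    have "R * (c + d) \<le> d * (S + R)" using ineq by (simp add: algebra_simps)
    then show ?thesis using SR c d by (simp add: divide_simps)
  qed
  show ?thesis using 1 2 unfolding w_s_def w_r_def S_def R_def c_def d_def by simp
qed


end
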